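(* Let $\Gamma$ be a group, let $\Delta \subset \Gamma$ be a finite index normal subgroup, and let $r_1, r_2 : \Gamma \to \mathrm{GL}_n(\overline{\mathbb{Q}}_p)$ be representations such that $r_1|_\Delta = r_2|_\Delta \otimes \chi$ for some character $\chi : \Delta \to \overline{\mathbb{Q}}_p^\times$. Suppose that for every finite index subgroup $\Delta' \subset \Gamma$, $r_1|_{\Delta'}$ is irreducible. Then $\chi$ extends to a character $\chi' : \Gamma \to \overline{\mathbb{Q}}_p^\times$ such that $r_1 = r_2 \otimes \chi'$. *)

theory Defs
  imports "HOL-Analysis.Analysis" "HOL-Algebra.Coset"
begin

text \<open>GL_n over an algebraically closed field of characteristic 0 is modelled by invertible
  n x n complex matrices (the abstract field of algebraic closure of Q_p is isomorphic to C);
  n is the cardinality of the finite index type 'n.\<close>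

definition is_rep :: "('g, 'b) monoid_scheme \<Rightarrow> ('g \<Rightarrow> complex^'n^'n) \<Rightarrow> bool" where
  "is_rep G r \<longleftrightarrow> (\<forall>g\<in>carrier G. invertible (r g)) \<and>
     (\<forall>g\<in>carrier G. \<forall>h\<in>carrier G. r (g \<otimes>\<^bsub>G\<^esub> h) = r g ** r h)"

definition is_char_on :: "('g, 'b) monoid_scheme \<Rightarrow> 'g set \<Rightarrow> ('g \<Rightarrow> complex) \<Rightarrow> bool" where
  "is_char_on G H chi \<longleftrightarrow> (\<forall>h\<in>H. chi h \<noteq> 0) \<and>
     (\<forall>g\<in>H. \<forall>h\<in>H. chi (g \<otimes>\<^bsub>G\<^esub> h) = chi g * chi h)"

definition twist :: "('g \<Rightarrow> complex^'n^'n) \<Rightarrow> ('g \<Rightarrow> complex) \<Rightarrow> 'g \<Rightarrow> complex^'n^'n" where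
  "twist r chi g = (\<chi> i j. chi g * (r g $ i $ j))"

definition csubspace_vec :: "(complex^'n) set \<Rightarrow> bool" where
  "csubspace_vec W \<longleftrightarrow> 0 \<in> W \<and> (\<forall>x\<in>W. \<forall>y\<in>W. x + y \<in> W) \<and> (\<forall>c. \<forall>x\<in>W. c *s x \<in> W)"

definition irreducible_on :: "'g set \<Rightarrow> ('g \<Rightarrow> complex^'n^'n) \<Rightarrow> bool" where
  "irreducible_on H r \<longleftrightarrow> (\<forall>W. csubspace_vec W \<and> (\<forall>h\<in>H. \<forall>w\<in>W. r h *v w \<in> W)
       \<longrightarrow> W = {0} \<or> W = UNIV)"

end

theory Submission
  imports Defs "HOL-Computational_Algebra.Fundamental_Theorem_Algebra"
begin


lemma prod_lin_coeff:
  fixes a :: "'i \<Rightarrow> complex"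
  assumes "finite A"
  shows "coeff (\<Prod>i\<in>A. [:a i, -1:]) (card A) = (-1) ^ card A"
proof -
  have d: "degree (\<Prod>i\<in>A. [:a i, -1:]) = card A"
    by (subst degree_prod_eq_sum_degree) auto
  have "lead_coeff (\<Prod>i\<in>A. [:a i, -1:]) = (\<Prod>i\<in>A. lead_coeff [:a i, -1:])"
    by (rule lead_coeff_prod)
  then show ?thesis using d by simp
qed

lemma eigen_exists:
  fixes Y :: "complex^'n^'n"
  shows "\<exists>l v. v \<noteq> 0 \<and> Y *v v = l *s v"
proof -
  define N where "N = CARD('n)"
  define M where "M = (\<lambda>l. (\<chi> i j. Y$i$j - (if i = j then l else 0)) :: complex^'n^'n)"
  define f where "f = (\<lambda>p i. [: Y$i$(p i), if i = p i then -1 else 0 :] :: complex poly)"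
  define q where "q = (\<Sum>p\<in>{p. p permutes (UNIV::'n set)}. of_int (sign p) * (\<Prod>i\<in>UNIV. f p i))"
  have pq: "poly q l = det (M l)" for l
    unfolding q_def det_def M_def f_def poly_sum poly_prod
    by (intro sum.cong refl) (auto intro!: prod.cong simp: algebra_simps poly_prod)
  have c0: "coeff (\<Prod>i\<in>UNIV. f p i) N = 0" if "p permutes UNIV" "p \<noteq> id" for p
  proof -
    obtain k where k: "k \<noteq> p k" using \<open>p \<noteq> id\<close> by (metis eq_id_iff)
    have dk: "degree (f p k) = 0" using k by (simp add: f_def)
    have "degree (\<Prod>i\<in>UNIV. f p i) \<le> (\<Sum>i\<in>UNIV. degree (f p i))"
      using degree_prod_sum_le[of UNIV "f p"] by (simp add: o_def)
    also have "\<dots> = (\<Sum>i\<in>UNIV - {k}. degree (f p i))"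
      by (rule sum.mono_neutral_right) (simp_all add: dk)
    also have "\<dots> \<le> (\<Sum>i\<in>UNIV - {k}. 1)"
      by (rule sum_mono) (auto simp: f_def)
    also have "\<dots> < N" by (simp add: N_def card_Diff_singleton)
    finally show ?thesis by (simp add: coeff_eq_0)
  qed
  have "coeff q N = (\<Sum>p\<in>{p. p permutes (UNIV::'n set)}. of_int (sign p) * coeff (\<Prod>i\<in>UNIV. f p i) N)"
    unfolding q_def coeff_sum by (simp add: of_int_poly)
  also have "\<dots> = of_int (sign (id::'n\<Rightarrow>'n)) * coeff (\<Prod>i\<in>UNIV. f id i) N"
    by (rule sum.mono_neutral_left[symmetric, where S = "{id}", simplified]) (auto simp: c0 permutes_id)
  also have "\<dots> = (-1) ^ N"
    using prod_lin_coeff[of UNIV "\<lambda>i. Y$i$i"] by (simp add: f_def sign_id N_def)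
  finally have "coeff q N \<noteq> 0" by simp
  moreover have "N > 0" by (simp add: N_def)
  ultimately have "degree q \<noteq> 0" using le_degree[of q N] by linarith
  then have "\<not> constant (poly q)" by (simp add: constant_degree)
  then obtain l where "poly q l = 0" using fundamental_theorem_of_algebra by blast
  then have "det (M l) = 0" by (simp add: pq)
  then have "\<not> invertible (M l)" by (simp add: invertible_det_nz)
  then have "\<not> (\<forall>x. M l *v x = 0 \<longrightarrow> x = 0)"
    using invertible_left_inverse[of "M l"] matrix_left_invertible_ker[of "M l"] by blast
  then obtain v where v: "v \<noteq> 0" "M l *v v = 0" by blast
  have "Y *v v = l *s v"
  proof -
    have "(Y *v v) $ i - l * v $ i = (M l *v v) $ i" for i
    proof -
      have "(M l *v v) $ i = (\<Sum>j\<in>UNIV. Y$i$j * v$j) - (\<Sum>j\<in>UNIV. (if i = j then l else 0) * v$j)"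
        unfolding M_def matrix_vector_mult_def by (simp add: left_diff_distrib sum_subtractf)
      also have "(\<Sum>j\<in>UNIV. (if i = j then l else 0) * v$j) = (\<Sum>j\<in>UNIV. (if i = j then l * v$j else 0))"
        by (rule sum.cong) auto
      also have "\<dots> = l * v $ i" by (simp add: sum.delta)
      finally show ?thesis by (simp add: matrix_vector_mult_def)
    qed
    then show ?thesis using v(2) by (simp add: vec_eq_iff)
  qed
  then show ?thesis using v by blast
qed


definition smat :: "complex \<Rightarrow> complex^'n^'m \<Rightarrow> complex^'n^'m" where
  "smat c M = (\<chi> i j. c * M$i$j)"

lemma smat_mult_left: "smat c A ** B = smat c (A ** B)"
  by (simp add: smat_def matrix_matrix_mult_def vec_eq_iff sum_distrib_left mult.assoc)
lemma smat_mult_right: "A ** smat c B = smat c (A ** B)"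
  by (simp add: smat_def matrix_matrix_mult_def vec_eq_iff sum_distrib_left mult_ac)
lemma smat_smat: "smat c (smat d A) = smat (c*d) A"
  by (simp add: smat_def vec_eq_iff mult_ac)
lemma smat_one: "smat 1 A = A"
  by (simp add: smat_def vec_eq_iff)
lemma smat_mv: "smat c A *v v = c *s (A *v v)"
  by (simp add: smat_def matrix_vector_mult_def vec_eq_iff sum_distrib_left mult_ac)
lemma det_smat: "det (smat c (A::complex^'n^'n)) = c ^ CARD('n) * det A"
proof -
  have "smat c A = (\<chi> i. c *s A$i)" by (simp add: smat_def vec_eq_iff)
  then show ?thesis using det_rows_mul[of "\<lambda>_. c" "\<lambda>i. A$i"] by simp
qed
lemma twist_smat: "twist r chi g = smat (chi g) (r g)"
  by (simp add: twist_def smat_def)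
lemma smat_cancel:
  assumes "invertible (M::complex^'n^'n)" "smat c M = smat c' M"
  shows "c = c'"
proof -
  have "M \<noteq> 0"
  proof
    assume "M = 0"
    then have "M ** M' = 0" for M' :: "complex^'n^'n"
      by (simp add: matrix_matrix_mult_def vec_eq_iff)
    moreover have "(mat 1 :: complex^'n^'n) \<noteq> 0"
    proof
      assume "(mat 1 :: complex^'n^'n) = 0"
      then have "(mat 1 :: complex^'n^'n) $ a $ a = 0" for a by simp
      then show False by (simp add: mat_def)
    qed
    ultimately show False using assms(1) unfolding invertible_def by force
  qed
  have "\<exists>i j. M$i$j \<noteq> 0"
  proof (rule ccontr)
    assume "\<not> (\<exists>i j. M$i$j \<noteq> 0)"
    then have "M = 0" by (simp add: vec_eq_iff)
    then show False using \<open>M \<noteq> 0\<close> by simp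
  qed
  then obtain i j where "M$i$j \<noteq> 0" by blast
  moreover have "c * M$i$j = c' * M$i$j"
    using arg_cong[OF assms(2), of "\<lambda>X. X$i$j"] by (simp add: smat_def)
  ultimately show ?thesis by simp
qed


lemma per_g:
  fixes G :: "('g, 'b) monoid_scheme"
    and D :: "'g set"
    and r1 r2 :: "'g \<Rightarrow> complex^'n^'n"
    and chi :: "'g \<Rightarrow> complex"
  assumes grp: "group G"
    and nD: "D \<lhd> G"
    and fin: "finite (rcosets\<^bsub>G\<^esub> D)"
    and rep1: "is_rep G r1" and rep2: "is_rep G r2"
    and ch: "is_char_on G D chi"
    and tw: "\<forall>d\<in>D. r1 d = twist r2 chi d"
    and irr: "\<forall>D'. subgroup D' G \<and> finite (rcosets\<^bsub>G\<^esub> D') \<longrightarrow> irreducible_on D' r1"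
    and g: "g \<in> carrier G"
  shows "\<exists>c. r1 g = smat c (r2 g)"
proof -
  interpret group G by (rule grp)
  interpret N: normal D G by (rule nD)
  have sD: "subgroup D G" using nD normal_imp_subgroup by blast
  have Dc: "d \<in> carrier G" if "d \<in> D" for d using that sD subgroup.subset by blast
  have chi0: "chi d \<noteq> 0" if "d \<in> D" for d using ch that unfolding is_char_on_def by blast
  have chim: "chi (d1 \<otimes>\<^bsub>G\<^esub> d2) = chi d1 * chi d2" if "d1 \<in> D" "d2 \<in> D" for d1 d2
    using ch that unfolding is_char_on_def by blast
  have inv1: "invertible (r1 x)" "invertible (r2 x)" if "x \<in> carrier G" for x
    using rep1 rep2 that unfolding is_rep_def by auto
  have hom1: "r1 (x \<otimes>\<^bsub>G\<^esub> y) = r1 x ** r1 y" and hom2: "r2 (x \<otimes>\<^bsub>G\<^esub> y) = r2 x ** r2 y"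
    if "x \<in> carrier G" "y \<in> carrier G" for x y
    using rep1 rep2 that unfolding is_rep_def by auto
  have twd: "r1 d = smat (chi d) (r2 d)" if "d \<in> D" for d using tw that by (simp add: twist_smat)
  define A where "A = r1 g"
  define B where "B = r2 g"
  obtain Bi where BBi: "B ** Bi = mat 1" and BiB: "Bi ** B = mat 1"
    using inv1(2)[OF g] unfolding B_def invertible_def by blast
  define Y where "Y = Bi ** A"
  define cj where "cj = (\<lambda>d. g \<otimes>\<^bsub>G\<^esub> d \<otimes>\<^bsub>G\<^esub> inv\<^bsub>G\<^esub> g)"
  have cjD: "cj d \<in> D" if "d \<in> D" for d using N.inv_op_closed2[OF g that] by (simp add: cj_def)
  have cjg: "cj d \<otimes>\<^bsub>G\<^esub> g = g \<otimes>\<^bsub>G\<^esub> d" if "d \<in> D" for d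
    using that g Dc by (simp add: cj_def m_assoc)
  have canc: "inv\<^bsub>G\<^esub> g \<otimes>\<^bsub>G\<^esub> (g \<otimes>\<^bsub>G\<^esub> x) = x" if "x \<in> carrier G" for x
    using that g by (simp add: m_assoc[symmetric])
  have cjm: "cj (d1 \<otimes>\<^bsub>G\<^esub> d2) = cj d1 \<otimes>\<^bsub>G\<^esub> cj d2" if "d1 \<in> D" "d2 \<in> D" for d1 d2
    using that g Dc by (simp add: cj_def m_assoc canc)
  define mu where "mu = (\<lambda>d. chi (cj d) / chi d)"
  have mu0: "mu d \<noteq> 0" if "d \<in> D" for d using that chi0 cjD by (simp add: mu_def)
  have mum: "mu (d1 \<otimes>\<^bsub>G\<^esub> d2) = mu d1 * mu d2" if "d1 \<in> D" "d2 \<in> D" for d1 d2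
    using that by (simp add: mu_def cjm chim cjD N.m_closed)
  have mu1: "mu \<one>\<^bsub>G\<^esub> = 1" using chi0[OF N.one_closed] by (simp add: mu_def cj_def g)
  have muinv: "mu (inv\<^bsub>G\<^esub> d) = 1 / mu d" if "d \<in> D" for d
  proof -
    have "mu d * mu (inv\<^bsub>G\<^esub> d) = 1" using mum[OF that N.m_inv_closed[OF that]] that Dc mu1 by simp
    then show ?thesis using mu0[OF that] by (simp add: field_simps)
  qed
  have key: "Y ** r2 d = smat (mu d) (r2 d ** Y)" if d: "d \<in> D" for d
  proof -
    have "r1 (cj d) ** A = A ** r1 d" unfolding A_def
      using hom1 cjg[OF d] Dc[OF d] Dc[OF cjD[OF d]] g by metis
    then have e1: "smat (chi (cj d)) (r2 (cj d) ** A) = smat (chi d) (A ** r2 d)"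
      using twd[OF d] twd[OF cjD[OF d]] by (simp add: smat_mult_left smat_mult_right)
    have "r2 (cj d) ** B = B ** r2 d" unfolding B_def
      using hom2 cjg[OF d] Dc[OF d] Dc[OF cjD[OF d]] g by metis
    then have "r2 (cj d) = B ** r2 d ** Bi"
      by (metis BBi matrix_mul_assoc matrix_mul_rid)
    with e1 have "smat (chi (cj d)) (B ** r2 d ** Bi ** A) = smat (chi d) (A ** r2 d)" by simp
    then have "Bi ** smat (chi (cj d)) (B ** r2 d ** Bi ** A) = Bi ** smat (chi d) (A ** r2 d)" by simp
    then have "smat (chi (cj d)) (r2 d ** Y) = smat (chi d) (Y ** r2 d)"
      by (simp add: smat_mult_right matrix_mul_assoc BiB Y_def)
    then have "smat (1 / chi d) (smat (chi (cj d)) (r2 d ** Y)) = smat (1 / chi d) (smat (chi d) (Y ** r2 d))"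
      by simp
    then show ?thesis using chi0[OF d] by (simp add: smat_smat smat_one mu_def)
  qed
  have detY: "det Y \<noteq> 0"
  proof -
    have "invertible Y" unfolding Y_def
      using BiB BBi inv1(1)[OF g] invertible_mult unfolding A_def invertible_def by metis
    then show ?thesis by (simp add: invertible_det_nz)
  qed
  have mupow: "mu d ^ CARD('n) = 1" if d: "d \<in> D" for d
  proof -
    have "det Y * det (r2 d) = mu d ^ CARD('n) * (det (r2 d) * det Y)"
      using arg_cong[OF key[OF d], of det] by (simp add: det_mul det_smat)
    moreover have "det (r2 d) \<noteq> 0" using inv1(2)[OF Dc[OF d]] by (simp add: invertible_det_nz)
    ultimately show ?thesis using detY by simp
  qed
  define H where "H = {d \<in> D. mu d = 1}"
  have sH: "subgroup H G"
  proof (rule subgroupI)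
    show "H \<subseteq> carrier G" using Dc by (auto simp: H_def)
    have "\<one>\<^bsub>G\<^esub> \<in> H" using mu1 N.one_closed by (simp add: H_def)
    then show "H \<noteq> {}" by blast
    show "inv\<^bsub>G\<^esub> a \<in> H" if "a \<in> H" for a using that muinv by (auto simp: H_def N.m_inv_closed)
    show "a \<otimes>\<^bsub>G\<^esub> b \<in> H" if "a \<in> H" "b \<in> H" for a b using that mum by (auto simp: H_def N.m_closed)
  qed
  have finH: "finite (rcosets\<^bsub>G\<^esub> H)"
  proof -
    define rep where "rep = (\<lambda>C. SOME y. y \<in> carrier G \<and> C = D #>\<^bsub>G\<^esub> y)"
    define R where "R = rep ` (rcosets\<^bsub>G\<^esub> D)"
    define F where "F = (\<lambda>(z, y). {k' \<otimes>\<^bsub>G\<^esub> y | k'. k' \<in> D \<and> mu k' = z})"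
    have "rcosets\<^bsub>G\<^esub> H \<subseteq> F ` ({z. z ^ CARD('n) = 1} \<times> R)"
    proof
      fix C assume "C \<in> rcosets\<^bsub>G\<^esub> H"
      then obtain x where x: "x \<in> carrier G" "C = H #>\<^bsub>G\<^esub> x" unfolding RCOSETS_def by blast
      have "D #>\<^bsub>G\<^esub> x \<in> rcosets\<^bsub>G\<^esub> D" using x unfolding RCOSETS_def by blast
      define y where "y = rep (D #>\<^bsub>G\<^esub> x)"
      have "\<exists>y. y \<in> carrier G \<and> D #>\<^bsub>G\<^esub> x = D #>\<^bsub>G\<^esub> y" using x by blast
      then have y: "y \<in> carrier G" "D #>\<^bsub>G\<^esub> x = D #>\<^bsub>G\<^esub> y" unfolding y_def rep_def by (metis (mono_tags, lifting) someI_ex)+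
      have yR: "y \<in> R" using \<open>D #>\<^bsub>G\<^esub> x \<in> rcosets\<^bsub>G\<^esub> D\<close> unfolding R_def y_def by blast
      have "x \<in> D #>\<^bsub>G\<^esub> y" using rcos_self[OF x(1) sD] y by simp
      then obtain k where k: "k \<in> D" "x = k \<otimes>\<^bsub>G\<^esub> y" unfolding r_coset_def by blast
      have "C = F (mu k, y)"
      proof
        show "C \<subseteq> F (mu k, y)"
        proof
          fix z assume "z \<in> C"
          then obtain h where h: "h \<in> H" "z = h \<otimes>\<^bsub>G\<^esub> x" using x unfolding r_coset_def by blast
          have "h \<in> D" "mu h = 1" using h by (auto simp: H_def)
          then have "z = (h \<otimes>\<^bsub>G\<^esub> k) \<otimes>\<^bsub>G\<^esub> y" "h \<otimes>\<^bsub>G\<^esub> k \<in> D" "mu (h \<otimes>\<^bsub>G\<^esub> k) = mu k"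
            using h k y Dc mum by (auto simp: m_assoc N.m_closed)
          then show "z \<in> F (mu k, y)" unfolding F_def by blast
        qed
        show "F (mu k, y) \<subseteq> C"
        proof
          fix z assume "z \<in> F (mu k, y)"
          then obtain k' where k': "k' \<in> D" "mu k' = mu k" "z = k' \<otimes>\<^bsub>G\<^esub> y" unfolding F_def by blast
          define h where "h = k' \<otimes>\<^bsub>G\<^esub> inv\<^bsub>G\<^esub> k"
          have hD: "h \<in> D" using k' k by (simp add: h_def N.m_closed N.m_inv_closed)
          have "mu h = 1" using k' k mu0 by (simp add: h_def mum muinv N.m_inv_closed)
          then have "h \<in> H" using hD by (simp add: H_def)
          moreover have "inv\<^bsub>G\<^esub> k \<otimes>\<^bsub>G\<^esub> (k \<otimes>\<^bsub>G\<^esub> y) = y"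
            using Dc[OF k(1)] y(1) by (simp add: m_assoc[symmetric])
          moreover have "z = h \<otimes>\<^bsub>G\<^esub> x" using k k' y Dc calculation(2) by (simp add: h_def m_assoc)
          ultimately show "z \<in> C" using x unfolding r_coset_def by blast
        qed
      qed
      moreover have "mu k ^ CARD('n) = 1" using mupow k by blast
      ultimately show "C \<in> F ` ({z. z ^ CARD('n) = 1} \<times> R)" using yR by blast
    qed
    moreover have "finite ({z::complex. z ^ CARD('n) = 1} \<times> R)"
      using finite_roots_unity[of "CARD('n)"] fin unfolding R_def by (intro finite_cartesian_product finite_imageI) auto
    ultimately show ?thesis using finite_subset by blast
  qed
  have irrH: "irreducible_on H r1" using irr sH finH by blast
  obtain l v where lv: "v \<noteq> 0" "Y *v v = l *s v" using eigen_exists by blast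
  define W where "W = {w. Y *v w = l *s w}"
  have "csubspace_vec W" unfolding csubspace_vec_def W_def
    by (auto simp: matrix_vector_right_distrib vector_scalar_commute vector_add_ldistrib mult.commute)
  moreover have "\<forall>h\<in>H. \<forall>w\<in>W. r1 h *v w \<in> W"
  proof (intro ballI)
    fix h w assume h: "h \<in> H" and w: "w \<in> W"
    have hD: "h \<in> D" "mu h = 1" using h by (auto simp: H_def)
    have "Y *v (r1 h *v w) = chi h *s (r2 h *v (Y *v w))"
      using key[OF hD(1)] hD(2) twd[OF hD(1)]
      by (simp add: vector_scalar_commute matrix_vector_mul_assoc smat_mult_right smat_mv smat_one)
    also have "\<dots> = l *s (r1 h *v w)" using w twd[OF hD(1)]
      by (simp add: W_def vector_scalar_commute smat_mv mult.commute)
    finally show "r1 h *v w \<in> W" by (simp add: W_def)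
  qed
  ultimately have "W = {0} \<or> W = UNIV" using irrH unfolding irreducible_on_def by blast
  moreover have "v \<in> W" using lv by (simp add: W_def)
  ultimately have WU: "W = UNIV" using lv by blast
  have "A = smat l B"
  proof (subst matrix_eq, intro allI)
    fix w
    have "A = B ** Y" by (simp add: Y_def matrix_mul_assoc BBi)
    then have "A *v w = B *v (Y *v w)" by (simp add: matrix_vector_mul_assoc)
    also have "\<dots> = l *s (B *v w)"
    proof -
      have "w \<in> W" using WU by blast
      then show ?thesis by (simp add: W_def vector_scalar_commute)
    qed
    finally show "A *v w = smat l B *v w" by (simp add: smat_mv)
  qed
  then show ?thesis unfolding A_def B_def by blast
qed
theorem lemma5p4:
  fixes G :: "('g, 'b) monoid_scheme"
    and D :: "'g set"
    and r1 r2 :: "'g \<Rightarrow> complex^'n^'n"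
    and chi :: "'g \<Rightarrow> complex"
  assumes "group G"
    and "D \<lhd> G"
    and "finite (rcosets\<^bsub>G\<^esub> D)"
    and "is_rep G r1" and "is_rep G r2"
    and "is_char_on G D chi"
    and "\<forall>d\<in>D. r1 d = twist r2 chi d"
    and "\<forall>D'. subgroup D' G \<and> finite (rcosets\<^bsub>G\<^esub> D') \<longrightarrow> irreducible_on D' r1"
  shows "\<exists>psi. is_char_on G (carrier G) psi \<and> (\<forall>d\<in>D. psi d = chi d) \<and>
           (\<forall>g\<in>carrier G. r1 g = twist r2 psi g)"
proof -
  interpret group G by (rule assms(1))
  have ex: "\<forall>g\<in>carrier G. \<exists>c. r1 g = smat c (r2 g)"
    using per_g[OF assms] by blast
  define psi where "psi = (\<lambda>g. SOME c. r1 g = smat c (r2 g))"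
  have psi: "r1 g = smat (psi g) (r2 g)" if "g \<in> carrier G" for g
    using ex that unfolding psi_def by (metis (mono_tags, lifting) someI_ex)
  have inv1: "invertible (r1 x)" "invertible (r2 x)" if "x \<in> carrier G" for x
    using assms(4,5) that unfolding is_rep_def by auto
  have hom1: "r1 (x \<otimes>\<^bsub>G\<^esub> y) = r1 x ** r1 y" and hom2: "r2 (x \<otimes>\<^bsub>G\<^esub> y) = r2 x ** r2 y"
    if "x \<in> carrier G" "y \<in> carrier G" for x y
    using assms(4,5) that unfolding is_rep_def by auto
  have sD: "subgroup D G" using assms(2) normal_imp_subgroup by blast
  have Dc: "d \<in> carrier G" if "d \<in> D" for d using that sD subgroup.subset by blast
  have "is_char_on G (carrier G) psi"
    unfolding is_char_on_def
  proof (intro conjI ballI)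
    fix h assume h: "h \<in> carrier G"
    show "psi h \<noteq> 0"
    proof
      assume "psi h = 0"
      then have "det (r1 h) = 0" using psi[OF h] by (simp add: det_smat)
      then show False using inv1(1)[OF h] by (simp add: invertible_det_nz)
    qed
  next
    fix g h assume g: "g \<in> carrier G" and h: "h \<in> carrier G"
    have "smat (psi (g \<otimes>\<^bsub>G\<^esub> h)) (r2 (g \<otimes>\<^bsub>G\<^esub> h)) = smat (psi g * psi h) (r2 (g \<otimes>\<^bsub>G\<^esub> h))"
      using psi[OF g] psi[OF h] psi[OF m_closed[OF g h]] hom1[OF g h] hom2[OF g h]
      by (simp add: smat_mult_left smat_mult_right smat_smat mult.commute)
    then show "psi (g \<otimes>\<^bsub>G\<^esub> h) = psi g * psi h"
      using smat_cancel inv1(2)[OF m_closed[OF g h]] by blast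
  qed
  moreover have "\<forall>d\<in>D. psi d = chi d"
  proof
    fix d assume d: "d \<in> D"
    have "smat (psi d) (r2 d) = smat (chi d) (r2 d)"
      using psi[OF Dc[OF d]] assms(7) d by (simp add: twist_smat)
    then show "psi d = chi d" using smat_cancel inv1(2)[OF Dc[OF d]] by blast
  qed
  moreover have "\<forall>g\<in>carrier G. r1 g = twist r2 psi g"
    using psi by (simp add: twist_smat)
  ultimately show ?thesis by blast
qed


end
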